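(* Let $\mathbf G_n=\mathbf G_n(d,\Omega,k,\Psi,\rho)$ be the Poisson random factor graph and assume $$\lim_{n\to\infty}\frac1{n^2}\sum_{i,j=1}^n\mathbb E\left\|\mu_{\mathbf G_n,x_i,x_j}-\mu_{\mathbf G_n,x_i}\otimes\mu_{\mathbf G_n,x_j}\right\|_{TV}=0 .$$ Then $$\frac1n\mathbb E\sum_{a\in F(\mathbf G_n)}\sum_{\sigma\in\Omega^{\partial a}}\left|\mu_{\mathbf G_n,a}(\sigma)-\frac{\psi_a(\sigma)\prod_{x\in\partial a}\mu_{\mathbf G_n,x\to a}(\sigma(x))}{\sum_{\tau\in\Omega^{\partial a}}\psi_a(\tau)\prod_{x\in\partial a}\mu_{\mathbf G_n,x\to a}(\tau(x))}\right|=o(1)\quad\text{as }n\to\infty.$$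
   Context: Factor graphs: Fix a finite set $\Omega$ of spins. A factor graph $G$ consists of variable nodes $V(G)$, constraint nodes $F(G)$, for each $a\in F(G)$ an ordered tuple $\partial a=(y_1,\ldots,y_{d(a)})$ of variable nodes and a weight function $\psi_a:\Omega^{d(a)}\to(0,\infty)$; for $\sigma\in\Omega^{\partial a}$, $\psi_a(\sigma)=\psi_a(\sigma(y_1),\ldots,\sigma(y_{d(a)}))$. Gibbs measure $\mu_G(\sigma)=Z_G^{-1}\prod_a\psi_a(\sigma(\partial a))$ on $\Omega^{V(G)}$; $\mu_{G,x}$, $\mu_{G,x,y}$ one- and two-point marginals; $\mu_{G,a}$ the joint distribution of the spins of the variables in $\partial a$. For $x\in\partial a$, $\mu_{G,x\to a}$ is the marginal of $x$ in the Gibbs measure of $G-a$ (constraint node $a$ deleted). Poisson random factor graph $\mathbf G_n(d,\Omega,k,\Psi,\rho)$: $d>0$, $k\geq3$, $\Psi$ a finite nonempty set of functions $\Omega^k\to(0,\infty)$, $\rho$ a distribution on $\Psi$, fixed as $n\to\infty$; variable nodes $x_1,\ldots,x_n$, $m\sim\mathrm{Po}(dn/k)$ constraint nodes, each independently with $\psi_{a_i}\sim\rho$ and $\partial a_i$ uniform in $\{x_1,\ldots,x_n\}^k$. *)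

theory Defs
  imports "HOL-Probability.Probability"
begin

text \<open>
  Variable nodes of G_n: the naturals 0..<n (x_1..x_n correspond to 0..n-1).
  A constraint node is a pair (psi, dA) of a weight function psi, applied to the
  list of spins of its variables, and the ordered k-tuple dA of variable nodes
  (a list of length k).  A factor graph on variables {..<n} is a list of
  constraint nodes (the constraint nodes are the list positions).
\<close>

type_synonym 's constr = "('s list \<Rightarrow> real) \<times> nat list"
type_synonym 's fgraph = "'s constr list"

definition configs :: "nat \<Rightarrow> (nat \<Rightarrow> 's) set" where
  "configs n = ({..<n} \<rightarrow>\<^sub>E (UNIV :: 's set))"

definition weight :: "'s fgraph \<Rightarrow> (nat \<Rightarrow> 's) \<Rightarrow> real" where
  "weight G \<sigma> = (\<Prod>a\<leftarrow>G. fst a (map \<sigma> (snd a)))"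

definition partition_fn :: "nat \<Rightarrow> 's::finite fgraph \<Rightarrow> real" where
  "partition_fn n G = (\<Sum>\<sigma>\<in>configs n. weight G \<sigma>)"

definition gibbs :: "nat \<Rightarrow> 's::finite fgraph \<Rightarrow> (nat \<Rightarrow> 's) \<Rightarrow> real" where
  "gibbs n G \<sigma> = weight G \<sigma> / partition_fn n G"

definition marg1 :: "nat \<Rightarrow> 's::finite fgraph \<Rightarrow> nat \<Rightarrow> 's \<Rightarrow> real" where
  "marg1 n G x s = (\<Sum>\<sigma>\<in>{\<sigma>\<in>configs n. \<sigma> x = s}. gibbs n G \<sigma>)"

definition marg2 :: "nat \<Rightarrow> 's::finite fgraph \<Rightarrow> nat \<Rightarrow> nat \<Rightarrow> 's \<Rightarrow> 's \<Rightarrow> real" where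
  "marg2 n G x y s t = (\<Sum>\<sigma>\<in>{\<sigma>\<in>configs n. \<sigma> x = s \<and> \<sigma> y = t}. gibbs n G \<sigma>)"

definition tv_pair :: "nat \<Rightarrow> 's::finite fgraph \<Rightarrow> nat \<Rightarrow> nat \<Rightarrow> real" where
  "tv_pair n G x y =
     (1/2) * (\<Sum>s\<in>(UNIV::'s set). \<Sum>t\<in>(UNIV::'s set).
                 \<bar>marg2 n G x y s t - marg1 n G x s * marg1 n G y t\<bar>)"

definition local_configs :: "nat list \<Rightarrow> (nat \<Rightarrow> 's) set" where
  "local_configs vs = (set vs \<rightarrow>\<^sub>E (UNIV :: 's set))"

definition marg_constr :: "nat \<Rightarrow> 's::finite fgraph \<Rightarrow> nat list \<Rightarrow> (nat \<Rightarrow> 's) \<Rightarrow> real" where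
  "marg_constr n G vs \<tau> =
     (\<Sum>\<sigma>\<in>{\<sigma>\<in>configs n. restrict \<sigma> (set vs) = \<tau>}. gibbs n G \<sigma>)"

definition del_constr :: "'s fgraph \<Rightarrow> nat \<Rightarrow> 's fgraph" where
  "del_constr G i = take i G @ drop (Suc i) G"

definition cavity :: "nat \<Rightarrow> 's::finite fgraph \<Rightarrow> nat \<Rightarrow> nat \<Rightarrow> 's \<Rightarrow> real" where
  "cavity n G i x s = marg1 n (del_constr G i) x s"

definition bp_weight :: "nat \<Rightarrow> 's::finite fgraph \<Rightarrow> nat \<Rightarrow> (nat \<Rightarrow> 's) \<Rightarrow> real" where
  "bp_weight n G i \<sigma> =
     fst (G ! i) (map \<sigma> (snd (G ! i))) * (\<Prod>x\<in>set (snd (G ! i)). cavity n G i x (\<sigma> x))"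

definition bp_error :: "nat \<Rightarrow> 's::finite fgraph \<Rightarrow> nat \<Rightarrow> real" where
  "bp_error n G i =
     (\<Sum>\<sigma>\<in>local_configs (snd (G ! i)).
        \<bar>marg_constr n G (snd (G ! i)) \<sigma>
          - bp_weight n G i \<sigma> / (\<Sum>\<tau>\<in>local_configs (snd (G ! i)). bp_weight n G i \<tau>)\<bar>)"

definition constr_pmf :: "nat \<Rightarrow> nat \<Rightarrow> ('s list \<Rightarrow> real) pmf \<Rightarrow> 's constr pmf" where
  "constr_pmf n k \<rho> =
     pair_pmf \<rho> (pmf_of_set {vs. length vs = k \<and> set vs \<subseteq> {..<n}})"

definition random_fg :: "nat \<Rightarrow> real \<Rightarrow> nat \<Rightarrow> ('s list \<Rightarrow> real) pmf \<Rightarrow> 's fgraph pmf" where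
  "random_fg n d k \<rho> =
     bind_pmf (poisson_pmf (d * real n / real k)) (\<lambda>m. replicate_pmf m (constr_pmf n k \<rho>))"

end

theory Submission
  imports Defs
begin

definition cov :: "'c set \<Rightarrow> ('c \<Rightarrow> real) \<Rightarrow> ('c \<Rightarrow> real) \<Rightarrow> ('c \<Rightarrow> real) \<Rightarrow> real" where
  "cov C \<mu> f g = (\<Sum>\<sigma>\<in>C. \<mu> \<sigma> * f \<sigma> * g \<sigma>) - (\<Sum>\<sigma>\<in>C. \<mu> \<sigma> * f \<sigma>) * (\<Sum>\<sigma>\<in>C. \<mu> \<sigma> * g \<sigma>)"


lemma cov_centered:
  assumes "(\<Sum>\<sigma>\<in>C. \<mu> \<sigma>) = 1"
  shows "cov C \<mu> f g = (\<Sum>\<sigma>\<in>C. \<mu> \<sigma> * (f \<sigma> - (\<Sum>\<sigma>\<in>C. \<mu> \<sigma> * f \<sigma>)) * (g \<sigma> - (\<Sum>\<sigma>\<in>C. \<mu> \<sigma> * g \<sigma>)))"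
proof -
  define F where "F = (\<Sum>\<sigma>\<in>C. \<mu> \<sigma> * f \<sigma>)"
  define H where "H = (\<Sum>\<sigma>\<in>C. \<mu> \<sigma> * g \<sigma>)"
  have "(\<Sum>\<sigma>\<in>C. \<mu> \<sigma> * (f \<sigma> - F) * (g \<sigma> - H)) =
        (\<Sum>\<sigma>\<in>C. \<mu> \<sigma> * f \<sigma> * g \<sigma>) - H * (\<Sum>\<sigma>\<in>C. \<mu> \<sigma> * f \<sigma>) - F * (\<Sum>\<sigma>\<in>C. \<mu> \<sigma> * g \<sigma>)
          + F * H * (\<Sum>\<sigma>\<in>C. \<mu> \<sigma>)"
    by (simp add: algebra_simps sum.distrib sum_subtractf sum_distrib_left)
  also have "\<dots> = cov C \<mu> f g" using assms by (simp add: cov_def F_def H_def)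
  finally show ?thesis by (simp add: F_def H_def)
qed

lemma weighted_CS:
  assumes "\<forall>\<sigma>\<in>C. 0 \<le> \<mu> \<sigma>"
  shows "\<bar>\<Sum>\<sigma>\<in>C. \<mu> \<sigma> * a \<sigma> * b \<sigma>\<bar> \<le> sqrt (\<Sum>\<sigma>\<in>C. \<mu> \<sigma> * (a \<sigma>)\<^sup>2) * sqrt (\<Sum>\<sigma>\<in>C. \<mu> \<sigma> * (b \<sigma>)\<^sup>2)"
proof -
  have e1: "(\<Sum>\<sigma>\<in>C. \<mu> \<sigma> * a \<sigma> * b \<sigma>) = (\<Sum>\<sigma>\<in>C. (sqrt (\<mu> \<sigma>) * a \<sigma>) * (sqrt (\<mu> \<sigma>) * b \<sigma>))"
    using assms by (intro sum.cong) (auto simp: algebra_simps)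
  have e2: "\<And>c. (\<Sum>\<sigma>\<in>C. \<mu> \<sigma> * (c \<sigma>)\<^sup>2) = (\<Sum>\<sigma>\<in>C. (sqrt (\<mu> \<sigma>) * c \<sigma>)\<^sup>2)"
    using assms by (intro sum.cong) (auto simp: power_mult_distrib)
  have "(\<Sum>\<sigma>\<in>C. \<mu> \<sigma> * a \<sigma> * b \<sigma>)\<^sup>2 \<le> (\<Sum>\<sigma>\<in>C. \<mu> \<sigma> * (a \<sigma>)\<^sup>2) * (\<Sum>\<sigma>\<in>C. \<mu> \<sigma> * (b \<sigma>)\<^sup>2)"
    unfolding e1 e2 by (rule Cauchy_Schwarz_ineq_sum)
  then have "sqrt ((\<Sum>\<sigma>\<in>C. \<mu> \<sigma> * a \<sigma> * b \<sigma>)\<^sup>2) \<le> sqrt ((\<Sum>\<sigma>\<in>C. \<mu> \<sigma> * (a \<sigma>)\<^sup>2) * (\<Sum>\<sigma>\<in>C. \<mu> \<sigma> * (b \<sigma>)\<^sup>2))"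
    by (rule real_sqrt_le_mono)
  then show ?thesis by (simp add: real_sqrt_mult)
qed

lemma sum_abs_cov:
  assumes C: "finite C" and Y: "finite Y" and mu: "\<forall>\<sigma>\<in>C. 0 \<le> \<mu> \<sigma>" and one: "(\<Sum>\<sigma>\<in>C. \<mu> \<sigma>) = 1"
    and f01: "\<forall>\<sigma>\<in>C. 0 \<le> f \<sigma> \<and> f \<sigma> \<le> 1"
  shows "(\<Sum>y\<in>Y. \<bar>cov C \<mu> f (g y)\<bar>) \<le> sqrt (\<Sum>y\<in>Y. \<Sum>y'\<in>Y. \<bar>cov C \<mu> (g y) (g y')\<bar>)"
proof -
  define E where "E h = (\<Sum>\<sigma>\<in>C. \<mu> \<sigma> * h \<sigma>)" for h
  define c where "c y = sgn (cov C \<mu> f (g y))" for y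
  define u where "u y \<sigma> = g y \<sigma> - E (g y)" for y \<sigma>
  define h where "h \<sigma> = (\<Sum>y\<in>Y. c y * u y \<sigma>)" for \<sigma>
  have cc: "\<And>y. cov C \<mu> f (g y) = (\<Sum>\<sigma>\<in>C. \<mu> \<sigma> * (f \<sigma> - E f) * u y \<sigma>)"
    using cov_centered[OF one] by (simp add: E_def u_def)
  have cgg: "\<And>y y'. cov C \<mu> (g y) (g y') = (\<Sum>\<sigma>\<in>C. \<mu> \<sigma> * u y \<sigma> * u y' \<sigma>)"
    using cov_centered[OF one] by (simp add: E_def u_def)
  have "(\<Sum>y\<in>Y. \<bar>cov C \<mu> f (g y)\<bar>) = (\<Sum>y\<in>Y. c y * cov C \<mu> f (g y))"
    by (intro sum.cong) (auto simp: c_def sgn_if)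
  also have "\<dots> = (\<Sum>\<sigma>\<in>C. \<mu> \<sigma> * (f \<sigma> - E f) * h \<sigma>)"
    unfolding cc h_def by (simp add: sum_distrib_left sum_distrib_right mult_ac sum.swap[of _ Y])
  also have "\<dots> \<le> \<bar>\<Sum>\<sigma>\<in>C. \<mu> \<sigma> * (f \<sigma> - E f) * h \<sigma>\<bar>" by simp
  also have "\<dots> \<le> sqrt (\<Sum>\<sigma>\<in>C. \<mu> \<sigma> * (f \<sigma> - E f)\<^sup>2) * sqrt (\<Sum>\<sigma>\<in>C. \<mu> \<sigma> * (h \<sigma>)\<^sup>2)"
    by (rule weighted_CS[OF mu])
  also have "\<dots> \<le> 1 * sqrt (\<Sum>y\<in>Y. \<Sum>y'\<in>Y. \<bar>cov C \<mu> (g y) (g y')\<bar>)"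
  proof (rule mult_mono)
    have "(\<Sum>\<sigma>\<in>C. \<mu> \<sigma> * (f \<sigma> - E f)\<^sup>2) = cov C \<mu> f f"
      using cov_centered[OF one, of f f] by (simp add: E_def power2_eq_square mult_ac)
    also have "\<dots> \<le> (\<Sum>\<sigma>\<in>C. \<mu> \<sigma> * f \<sigma> * f \<sigma>)" by (simp add: cov_def)
    also have "\<dots> \<le> (\<Sum>\<sigma>\<in>C. \<mu> \<sigma>)"
    proof (rule sum_mono)
      fix \<sigma> assume "\<sigma> \<in> C"
      then have "f \<sigma> * f \<sigma> \<le> 1" "0 \<le> \<mu> \<sigma>" using f01 mu by (auto intro: mult_le_one)
      then show "\<mu> \<sigma> * f \<sigma> * f \<sigma> \<le> \<mu> \<sigma>"
        by (metis mult.assoc mult_left_le)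
    qed
    finally show "sqrt (\<Sum>\<sigma>\<in>C. \<mu> \<sigma> * (f \<sigma> - E f)\<^sup>2) \<le> 1" using one by simp
  next
    have "(\<Sum>\<sigma>\<in>C. \<mu> \<sigma> * (h \<sigma>)\<^sup>2) = (\<Sum>y\<in>Y. \<Sum>y'\<in>Y. c y * c y' * cov C \<mu> (g y) (g y'))"
      unfolding cgg h_def power2_eq_square sum_product
      by (simp add: sum_distrib_left sum_distrib_right mult_ac sum.swap[of _ C])
    also have "\<dots> \<le> (\<Sum>y\<in>Y. \<Sum>y'\<in>Y. \<bar>cov C \<mu> (g y) (g y')\<bar>)"
    proof (intro sum_mono)
      fix y y'
      have "c y * c y' * cov C \<mu> (g y) (g y') \<le> \<bar>c y * c y' * cov C \<mu> (g y) (g y')\<bar>" by simp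
      also have "\<dots> \<le> \<bar>cov C \<mu> (g y) (g y')\<bar>"
        by (auto simp: c_def abs_mult sgn_if)
      finally show "c y * c y' * cov C \<mu> (g y) (g y') \<le> \<bar>cov C \<mu> (g y) (g y')\<bar>" .
    qed
    finally show "sqrt (\<Sum>\<sigma>\<in>C. \<mu> \<sigma> * (h \<sigma>)\<^sup>2) \<le> sqrt (\<Sum>y\<in>Y. \<Sum>y'\<in>Y. \<bar>cov C \<mu> (g y) (g y')\<bar>)"
      by simp
  qed (use mu in \<open>auto intro!: sum_nonneg\<close>)
  finally show ?thesis by simp
qed



definition probG :: "nat \<Rightarrow> 's::finite fgraph \<Rightarrow> bool" where
  "probG n G \<longleftrightarrow> (\<forall>\<sigma>\<in>configs n. 0 \<le> gibbs n G \<sigma>) \<and> (\<Sum>\<sigma>\<in>configs n. gibbs n G \<sigma>) = 1"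

definition ind :: "bool \<Rightarrow> real" where "ind P = (if P then 1 else 0)"

lemma finite_configs[simp]: "finite (configs n :: (nat \<Rightarrow> 's::finite) set)"
  by (simp add: configs_def finite_PiE)

lemma finite_lc[simp]: "finite (local_configs vs :: (nat \<Rightarrow> 's::finite) set)"
  by (simp add: local_configs_def finite_PiE)

lemma sum_filter_ind:
  "finite A \<Longrightarrow> (\<Sum>\<sigma>\<in>{\<sigma>\<in>A. P \<sigma>}. f \<sigma>) = (\<Sum>\<sigma>\<in>A. f \<sigma> * ind (P \<sigma>))"
  by (simp add: sum.inter_filter ind_def if_distrib cong: if_cong)

lemma marg1_eq: "marg1 n G x s = (\<Sum>\<sigma>\<in>configs n. gibbs n G \<sigma> * ind (\<sigma> x = s))"
  unfolding marg1_def by (simp add: sum_filter_ind)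

lemma marg2_eq: "marg2 n G x y s t = (\<Sum>\<sigma>\<in>configs n. gibbs n G \<sigma> * ind (\<sigma> x = s) * ind (\<sigma> y = t))"
  unfolding marg2_def by (simp add: sum_filter_ind ind_def, intro sum.cong) auto

lemma margc_eq: "marg_constr n G vs \<tau> = (\<Sum>\<sigma>\<in>configs n. gibbs n G \<sigma> * ind (restrict \<sigma> (set vs) = \<tau>))"
  unfolding marg_constr_def by (simp add: sum_filter_ind)

lemma cov_marg:
  "cov (configs n) (gibbs n G) (\<lambda>\<sigma>. ind (\<sigma> x = s)) (\<lambda>\<sigma>. ind (\<sigma> y = t))
     = marg2 n G x y s t - marg1 n G x s * marg1 n G y t"
  by (simp add: cov_def marg1_eq marg2_eq)

lemma tv_pair_nonneg: "0 \<le> tv_pair n G x y"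
  unfolding tv_pair_def by (auto intro!: sum_nonneg)

lemma cov_tv:
  "\<bar>cov (configs n) (gibbs n G) (\<lambda>\<sigma>. ind (\<sigma> x = s)) (\<lambda>\<sigma>. ind (\<sigma> y = s))\<bar> \<le> 2 * tv_pair n G x y"
proof -
  let ?F = "\<lambda>s t. \<bar>marg2 n G x y s t - marg1 n G x s * marg1 n G y t\<bar>"
  have "?F s s \<le> (\<Sum>t\<in>UNIV. ?F s t)" by (rule member_le_sum) auto
  also have "\<dots> \<le> (\<Sum>s\<in>UNIV. \<Sum>t\<in>UNIV. ?F s t)"
    by (rule member_le_sum[where f="\<lambda>s. \<Sum>t\<in>UNIV. ?F s t"]) (auto intro: sum_nonneg)
  finally show ?thesis by (simp add: cov_marg tv_pair_def)
qed

definition TT :: "nat \<Rightarrow> 's::finite fgraph \<Rightarrow> real" where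
  "TT n G = (\<Sum>i<n. \<Sum>j<n. tv_pair n G i j)"

lemma TT_nonneg: "0 \<le> TT n G"
  unfolding TT_def by (auto intro!: sum_nonneg tv_pair_nonneg)

definition jdist :: "nat \<Rightarrow> 's::finite fgraph \<Rightarrow> nat list \<Rightarrow> real" where
  "jdist n G vs = (\<Sum>\<tau>\<in>local_configs vs.
      \<bar>marg_constr n G vs \<tau> - (\<Prod>x\<in>set vs. marg1 n G x (\<tau> x))\<bar>)"

definition Err :: "nat \<Rightarrow> 's::finite fgraph \<Rightarrow> nat \<Rightarrow> nat list \<Rightarrow> real" where
  "Err n G y ws = (\<Sum>s\<in>(UNIV::'s set). \<Sum>\<tau>\<in>local_configs ws.
      \<bar>cov (configs n) (gibbs n G) (\<lambda>\<sigma>. ind (restrict \<sigma> (set ws) = \<tau>)) (\<lambda>\<sigma>. ind (\<sigma> y = s))\<bar>)"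

lemma Err_nonneg: "0 \<le> Err n G y ws"
  unfolding Err_def by (auto intro!: sum_nonneg)

lemma sum_Err:
  fixes G :: "'s::finite fgraph"
  assumes P: "probG n G"
  shows "(\<Sum>y<n. Err n G y ws) \<le> real CARD('s) * real (card (local_configs ws :: (nat\<Rightarrow>'s::finite) set)) * sqrt (2 * TT n G)"
proof -
  have "(\<Sum>y<n. Err n G y ws) = (\<Sum>s\<in>(UNIV::'s set). \<Sum>\<tau>\<in>local_configs ws. \<Sum>y<n.
      \<bar>cov (configs n) (gibbs n G) (\<lambda>\<sigma>. ind (restrict \<sigma> (set ws) = \<tau>)) (\<lambda>\<sigma>. ind (\<sigma> y = s))\<bar>)"
    unfolding Err_def by (simp add: sum.swap[of _ "{..<n}"])
  also have "\<dots> \<le> (\<Sum>s\<in>(UNIV::'s set). \<Sum>\<tau>\<in>(local_configs ws :: (nat\<Rightarrow>'s) set). sqrt (2 * TT n G))"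
  proof -
   have B: "\<And>s \<tau>. (\<Sum>y<n. \<bar>cov (configs n) (gibbs n G) (\<lambda>\<sigma>. ind (restrict \<sigma> (set ws) = \<tau>)) (\<lambda>\<sigma>. ind (\<sigma> y = s))\<bar>)
       \<le> sqrt (2 * TT n G)"
   proof -
    fix s :: 's and \<tau> :: "nat \<Rightarrow> 's"
    have "(\<Sum>y<n. \<bar>cov (configs n) (gibbs n G) (\<lambda>\<sigma>. ind (restrict \<sigma> (set ws) = \<tau>)) (\<lambda>\<sigma>. ind (\<sigma> y = s))\<bar>)
       \<le> sqrt (\<Sum>y<n. \<Sum>y'<n. \<bar>cov (configs n) (gibbs n G) (\<lambda>\<sigma>. ind (\<sigma> y = s)) (\<lambda>\<sigma>. ind (\<sigma> y' = s))\<bar>)"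
      using P unfolding probG_def
      by (intro sum_abs_cov[where g="\<lambda>y \<sigma>. ind (\<sigma> y = s)", simplified]) (auto simp: ind_def)
    also have "\<dots> \<le> sqrt (\<Sum>y<n. \<Sum>y'<n. 2 * tv_pair n G y y')"
      by (intro real_sqrt_le_mono sum_mono cov_tv)
    also have "\<dots> = sqrt (2 * TT n G)"
      by (simp add: TT_def sum_distrib_left)
    finally show "(\<Sum>y<n. \<bar>cov (configs n) (gibbs n G) (\<lambda>\<sigma>. ind (restrict \<sigma> (set ws) = \<tau>)) (\<lambda>\<sigma>. ind (\<sigma> y = s))\<bar>)
       \<le> sqrt (2 * TT n G)" .
   qed
   show ?thesis apply (rule sum_mono) apply (rule sum_mono) by (rule B)
  qed
  also have "\<dots> = real CARD('s) * real (card (local_configs ws :: (nat\<Rightarrow>'s::finite) set)) * sqrt (2 * TT n G)"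
    by simp
  finally show ?thesis .
qed



lemma sum_ind_eq_one: "(\<Sum>s\<in>(UNIV::'s::finite set). ind (a = s)) = 1"
  by (simp add: ind_def)

lemma sum_marg1_one:
  fixes G :: "'s::finite fgraph"
  assumes "probG n G" shows "(\<Sum>s\<in>UNIV. marg1 n G y s) = 1"
proof -
  have "(\<Sum>s\<in>UNIV. marg1 n G y s) = (\<Sum>\<sigma>\<in>configs n. gibbs n G \<sigma> * (\<Sum>s\<in>(UNIV::'s set). ind (\<sigma> y = s)))"
    unfolding marg1_eq by (simp add: sum_distrib_left sum.swap[of _ "UNIV::'s set"])
  also have "\<dots> = 1" using assms by (simp add: sum_ind_eq_one probG_def)
  finally show ?thesis .
qed

lemma marg1_nonneg: "probG n G \<Longrightarrow> 0 \<le> marg1 n G x s"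
  unfolding marg1_def probG_def by (auto intro!: sum_nonneg)

lemma margc_nonneg: "probG n G \<Longrightarrow> 0 \<le> marg_constr n G vs \<tau>"
  unfolding marg_constr_def probG_def by (auto intro!: sum_nonneg)

lemma restrict_insert_eq:
  assumes "g \<in> S \<rightarrow>\<^sub>E UNIV" "y \<notin> S"
  shows "(restrict \<sigma> (insert y S) = g(y:=s)) = (restrict \<sigma> S = g \<and> \<sigma> y = s)"
proof
  assume h: "restrict \<sigma> (insert y S) = g(y:=s)"
  have "\<sigma> y = s" using fun_cong[OF h, of y] by simp
  moreover have "restrict \<sigma> S = g"
  proof
    fix x show "restrict \<sigma> S x = g x"
      using fun_cong[OF h, of x] assms by (cases "x \<in> S") (auto simp: PiE_def extensional_def)
  qed
  ultimately show "restrict \<sigma> S = g \<and> \<sigma> y = s" by simp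
next
  assume h: "restrict \<sigma> S = g \<and> \<sigma> y = s"
  show "restrict \<sigma> (insert y S) = g(y:=s)"
  proof
    fix x show "restrict \<sigma> (insert y S) x = (g(y:=s)) x"
      using h assms by (cases "x \<in> S") (auto simp: PiE_def extensional_def)
  qed
qed

lemma jdist_cons_in: "y \<in> set ws \<Longrightarrow> jdist n G (y#ws) = jdist n G ws"
  by (simp add: jdist_def local_configs_def marg_constr_def insert_absorb)

lemma jdist_cons_notin:
  fixes G :: "'s::finite fgraph"
  assumes P: "probG n G" and y: "y \<notin> set ws"
  shows "jdist n G (y#ws) \<le> jdist n G ws + Err n G y ws"
proof -
  let ?S = "set ws"
  let ?L = "local_configs ws :: (nat \<Rightarrow> 's) set"
  let ?h = "\<lambda>(s::'s, g::nat\<Rightarrow>'s). g(y:=s)"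
  let ?m = "marg1 n G"
  let ?M = "\<lambda>g. marg_constr n G ws g"
  let ?Q = "\<lambda>g. \<Prod>x\<in>?S. ?m x (g x)"
  let ?cv = "\<lambda>s g. cov (configs n) (gibbs n G) (\<lambda>\<sigma>. ind (restrict \<sigma> ?S = g)) (\<lambda>\<sigma>. ind (\<sigma> y = s))"
  have LC: "(local_configs (y#ws) :: (nat \<Rightarrow> 's) set) = ?h ` (UNIV \<times> ?L)"
    by (simp add: local_configs_def PiE_insert_eq)
  have inj: "inj_on ?h (UNIV \<times> ?L)"
  proof (rule inj_onI, clarify)
    fix s g s' g' assume g: "g \<in> ?L" and g': "g' \<in> ?L" and e: "g(y := s) = g'(y := s')"
    show "s = s' \<and> g = g'"
    proof
      show "s = s'" using fun_cong[OF e, of y] by simp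
      show "g = g'"
      proof
        fix x show "g x = g' x"
          using fun_cong[OF e, of x] g g' y
          by (cases "x = y") (auto simp: local_configs_def PiE_def extensional_def)
      qed
    qed
  qed
  have tm: "\<bar>marg_constr n G (y#ws) (g(y:=s)) - (\<Prod>x\<in>set (y#ws). ?m x ((g(y:=s)) x))\<bar>
      \<le> \<bar>?cv s g\<bar> + ?m y s * \<bar>?M g - ?Q g\<bar>" if g: "g \<in> ?L" for s g
  proof -
    have gS: "g \<in> ?S \<rightarrow>\<^sub>E UNIV" using g by (simp add: local_configs_def)
    have A: "marg_constr n G (y#ws) (g(y:=s)) =
        (\<Sum>\<sigma>\<in>configs n. gibbs n G \<sigma> * ind (restrict \<sigma> ?S = g) * ind (\<sigma> y = s))"
      unfolding margc_eq
      by (intro sum.cong refl) (simp add: restrict_insert_eq[OF gS y] ind_def)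
    have Pr: "(\<Prod>x\<in>set (y#ws). ?m x ((g(y:=s)) x)) = ?m y s * ?Q g"
    proof -
      have "(\<Prod>x\<in>set (y#ws). ?m x ((g(y:=s)) x)) = ?m y s * (\<Prod>x\<in>?S. ?m x ((g(y:=s)) x))"
        using y by (simp add: prod.insert)
      also have "(\<Prod>x\<in>?S. ?m x ((g(y:=s)) x)) = ?Q g"
        using y by (intro prod.cong) auto
      finally show ?thesis .
    qed
    have cv: "?cv s g = marg_constr n G (y#ws) (g(y:=s)) - ?M g * ?m y s"
      unfolding cov_def A by (simp add: margc_eq marg1_eq)
    have "marg_constr n G (y#ws) (g(y:=s)) - (\<Prod>x\<in>set (y#ws). ?m x ((g(y:=s)) x))
        = ?cv s g + ?m y s * (?M g - ?Q g)"
      unfolding cv Pr by (simp add: algebra_simps)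
    also have "\<bar>\<dots>\<bar> \<le> \<bar>?cv s g\<bar> + ?m y s * \<bar>?M g - ?Q g\<bar>"
      using marg1_nonneg[OF P] by (simp add: abs_triangle_ineq[THEN order_trans] abs_mult)
    finally show ?thesis .
  qed
  have "jdist n G (y#ws) = (\<Sum>(s,g)\<in>UNIV \<times> ?L.
      \<bar>marg_constr n G (y#ws) (g(y:=s)) - (\<Prod>x\<in>set (y#ws). ?m x ((g(y:=s)) x))\<bar>)"
    unfolding jdist_def LC by (subst sum.reindex[OF inj]) (simp add: case_prod_beta)
  also have "\<dots> = (\<Sum>s\<in>UNIV. \<Sum>g\<in>?L.
      \<bar>marg_constr n G (y#ws) (g(y:=s)) - (\<Prod>x\<in>set (y#ws). ?m x ((g(y:=s)) x))\<bar>)"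
    by (simp add: sum.cartesian_product)
  also have "\<dots> \<le> (\<Sum>s\<in>UNIV. \<Sum>g\<in>?L. \<bar>?cv s g\<bar> + ?m y s * \<bar>?M g - ?Q g\<bar>)"
    by (intro sum_mono tm) auto
  also have "\<dots> = Err n G y ws + (\<Sum>s\<in>UNIV. ?m y s) * jdist n G ws"
    by (simp add: Err_def jdist_def sum.distrib sum_distrib_left sum_distrib_right sum.swap[of _ "UNIV::'s set"])
  also have "\<dots> = Err n G y ws + jdist n G ws" using sum_marg1_one[OF P] by simp
  finally show ?thesis by simp
qed

lemma jdist_cons:
  fixes G :: "'s::finite fgraph"
  assumes P: "probG n G"
  shows "jdist n G (y#ws) \<le> jdist n G ws + Err n G y ws"
  using jdist_cons_notin[OF P] jdist_cons_in Err_nonneg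
  by (metis add_increasing2 order_refl)



definition LL :: "nat \<Rightarrow> nat \<Rightarrow> nat list set" where
  "LL n j = {xs. set xs \<subseteq> {..<n} \<and> length xs = j}"

lemma finite_LL[simp]: "finite (LL n j)"
  by (simp add: LL_def finite_lists_length_eq)

lemma card_LL: "card (LL n j) = n ^ j"
  by (simp add: LL_def card_lists_length_eq)

lemma jdist_nil:
  fixes G :: "'s::finite fgraph"
  assumes P: "probG n G" shows "jdist n G [] = 0"
proof -
  have lc: "(local_configs [] :: (nat \<Rightarrow> 's) set) = {\<lambda>_. undefined}"
    by (simp add: local_configs_def)
  have "marg_constr n G [] (\<lambda>_. undefined) = (\<Sum>\<sigma>\<in>configs n. gibbs n G \<sigma>)"
    unfolding marg_constr_def by (intro sum.cong) auto
  then show ?thesis using P by (simp add: jdist_def lc probG_def)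
qed

lemma card_lc_le:
  "real (card (local_configs ws :: (nat\<Rightarrow>'s::finite) set)) \<le> real CARD('s) ^ length ws"
proof -
  have "card (local_configs ws :: (nat\<Rightarrow>'s::finite) set) = CARD('s) ^ card (set ws)"
    by (simp add: local_configs_def card_PiE)
  moreover have "real CARD('s) ^ card (set ws) \<le> real CARD('s) ^ length ws"
    by (rule power_increasing) (auto simp: card_length Suc_le_eq)
  ultimately show ?thesis by simp
qed

lemma LL_Suc: "LL n (Suc j) = (\<lambda>(xs, y). y # xs) ` (LL n j \<times> {..<n})"
  unfolding LL_def by (rule lists_length_Suc_eq)

lemma kwise:
  fixes G :: "'s::finite fgraph"
  assumes P: "probG n G"
  shows "real n * (\<Sum>vs\<in>LL n j. jdist n G vs)
          \<le> real j * real n ^ j * real CARD('s) ^ j * sqrt (2 * TT n G)"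
proof (induction j)
  case 0
  have "LL n 0 = {[]}" by (auto simp: LL_def)
  then show ?case using jdist_nil[OF P] by simp
next
  case (Suc j)
  define r where "r = sqrt (2 * TT n G)"
  define c where "c = real CARD('s)"
  have r0: "0 \<le> r" by (simp add: r_def TT_nonneg)
  have c1: "1 \<le> c" by (simp add: c_def Suc_le_eq)
  have inj: "inj_on (\<lambda>(xs, y). y # xs) (LL n j \<times> {..<n})" by (auto simp: inj_on_def)
  have "(\<Sum>vs\<in>LL n (Suc j). jdist n G vs) = (\<Sum>ws\<in>LL n j. \<Sum>y<n. jdist n G (y # ws))"
    unfolding LL_Suc sum.reindex[OF inj] by (simp add: sum.cartesian_product split_def)
  also have "\<dots> \<le> (\<Sum>ws\<in>LL n j. \<Sum>y<n. jdist n G ws + Err n G y ws)"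
    by (intro sum_mono jdist_cons[OF P])
  also have "\<dots> = real n * (\<Sum>ws\<in>LL n j. jdist n G ws) + (\<Sum>ws\<in>LL n j. \<Sum>y<n. Err n G y ws)"
    by (simp add: sum.distrib sum_distrib_left)
  also have "(\<Sum>ws\<in>LL n j. \<Sum>y<n. Err n G y ws) \<le> (\<Sum>ws\<in>LL n j. c * c ^ j * r)"
  proof (intro sum_mono)
    fix ws assume ws: "ws \<in> LL n j"
    have "(\<Sum>y<n. Err n G y ws) \<le> c * real (card (local_configs ws :: (nat\<Rightarrow>'s) set)) * r"
      using sum_Err[OF P] by (simp add: c_def r_def)
    also have "\<dots> \<le> c * c ^ j * r"
      using card_lc_le[of ws] ws c1 r0 by (intro mult_right_mono mult_left_mono) (auto simp: LL_def c_def)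
    finally show "(\<Sum>y<n. Err n G y ws) \<le> c * c ^ j * r" .
  qed
  also have "(\<Sum>ws\<in>LL n j. c * c ^ j * r) = real n ^ j * c ^ Suc j * r"
    by (simp add: card_LL)
  finally have S: "(\<Sum>vs\<in>LL n (Suc j). jdist n G vs)
      \<le> real n * (\<Sum>ws\<in>LL n j. jdist n G ws) + real n ^ j * c ^ Suc j * r" by simp
  have IH: "real n * (\<Sum>ws\<in>LL n j. jdist n G ws) \<le> real j * real n ^ j * c ^ j * r"
    using Suc.IH by (simp add: c_def r_def)
  have cj: "c ^ j \<le> c ^ Suc j" using c1 by (intro power_increasing) auto
  have "real n * (\<Sum>vs\<in>LL n (Suc j). jdist n G vs)
      \<le> real n * (real n * (\<Sum>ws\<in>LL n j. jdist n G ws)) + real n * (real n ^ j * c ^ Suc j * r)"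
    using S by (simp add: distrib_left[symmetric] mult_left_mono)
  also have "\<dots> \<le> real n * (real j * real n ^ j * c ^ j * r) + real n * (real n ^ j * c ^ Suc j * r)"
    using IH by (simp add: mult_left_mono)
  also have "\<dots> \<le> real n * (real j * real n ^ j * c ^ Suc j * r) + real n * (real n ^ j * c ^ Suc j * r)"
    using cj r0 by (intro add_right_mono mult_left_mono mult_right_mono) auto
  also have "\<dots> = real (Suc j) * real n ^ Suc j * c ^ Suc j * r"
    by (simp add: algebra_simps)
  finally show ?case by (simp add: c_def r_def)
qed



lemma normalize_bound:
  fixes w p q :: "'a \<Rightarrow> real"
  assumes T: "finite T" and wmin: "0 < wmin"
    and wb: "\<forall>\<tau>\<in>T. wmin \<le> w \<tau> \<and> w \<tau> \<le> wmax"
    and p0: "\<forall>\<tau>\<in>T. 0 \<le> p \<tau>" and q0: "\<forall>\<tau>\<in>T. 0 \<le> q \<tau>" and p1: "(\<Sum>\<tau>\<in>T. p \<tau>) = 1"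
  shows "(\<Sum>\<tau>\<in>T. \<bar>w \<tau> * p \<tau> / (\<Sum>\<tau>'\<in>T. w \<tau>' * p \<tau>') - w \<tau> * q \<tau> / (\<Sum>\<tau>'\<in>T. w \<tau>' * q \<tau>')\<bar>)
     \<le> 2 * (wmax / wmin) * (\<Sum>\<tau>\<in>T. \<bar>p \<tau> - q \<tau>\<bar>)"
proof -
  define P where "P = (\<Sum>\<tau>'\<in>T. w \<tau>' * p \<tau>')"
  define Q where "Q = (\<Sum>\<tau>'\<in>T. w \<tau>' * q \<tau>')"
  define D where "D = (\<Sum>\<tau>\<in>T. w \<tau> * \<bar>p \<tau> - q \<tau>\<bar>)"
  have w0: "\<forall>\<tau>\<in>T. 0 < w \<tau>" using wb wmin by force
  have "wmin * (\<Sum>\<tau>\<in>T. p \<tau>) \<le> P"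
    unfolding P_def sum_distrib_left using wb p0 by (intro sum_mono mult_right_mono) auto
  then have Pge: "wmin \<le> P" using p1 by simp
  then have Ppos: "0 < P" using wmin by simp
  have Q0: "0 \<le> Q" unfolding Q_def using w0 q0 by (intro sum_nonneg) (simp add: less_imp_le)
  have D0: "0 \<le> D" unfolding D_def using w0 by (intro sum_nonneg) (simp add: less_imp_le)
  have Dle: "D \<le> wmax * (\<Sum>\<tau>\<in>T. \<bar>p \<tau> - q \<tau>\<bar>)"
    unfolding D_def sum_distrib_left using wb by (intro sum_mono mult_right_mono) auto
  have step: "\<bar>w \<tau> * p \<tau> / P - w \<tau> * q \<tau> / Q\<bar> \<le> w \<tau> * \<bar>p \<tau> - q \<tau>\<bar> / P + w \<tau> * q \<tau> * \<bar>1 / P - 1 / Q\<bar>"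
    if "\<tau> \<in> T" for \<tau>
  proof -
    have "w \<tau> * p \<tau> / P - w \<tau> * q \<tau> / Q = w \<tau> * (p \<tau> - q \<tau>) / P + w \<tau> * q \<tau> * (1 / P - 1 / Q)"
      using Ppos by (simp add: field_simps)
    also have "\<bar>\<dots>\<bar> \<le> \<bar>w \<tau> * (p \<tau> - q \<tau>) / P\<bar> + \<bar>w \<tau> * q \<tau> * (1 / P - 1 / Q)\<bar>"
      by (rule abs_triangle_ineq)
    also have "\<dots> = w \<tau> * \<bar>p \<tau> - q \<tau>\<bar> / P + w \<tau> * q \<tau> * \<bar>1 / P - 1 / Q\<bar>"
      using w0 q0 Ppos that by (simp add: abs_mult abs_divide less_imp_le)
    finally show ?thesis .
  qed
  have second: "Q * \<bar>1 / P - 1 / Q\<bar> \<le> D / P"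
  proof (cases "Q = 0")
    case True then show ?thesis using D0 Ppos by simp
  next
    case False
    then have "Q * \<bar>1 / P - 1 / Q\<bar> = \<bar>Q - P\<bar> / P"
      using Ppos Q0 by (simp add: field_simps abs_divide abs_mult)
    also have "\<bar>Q - P\<bar> = \<bar>\<Sum>\<tau>\<in>T. w \<tau> * (q \<tau> - p \<tau>)\<bar>"
      by (simp add: P_def Q_def algebra_simps sum_subtractf)
    also have "\<dots> \<le> (\<Sum>\<tau>\<in>T. \<bar>w \<tau> * (q \<tau> - p \<tau>)\<bar>)" by (rule sum_abs)
    also have "\<dots> = D" unfolding D_def using w0 by (intro sum.cong) (auto simp: abs_mult abs_minus_commute)
    finally show ?thesis using Ppos by (simp add: divide_right_mono)
  qed
  have "(\<Sum>\<tau>\<in>T. \<bar>w \<tau> * p \<tau> / P - w \<tau> * q \<tau> / Q\<bar>)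
      \<le> (\<Sum>\<tau>\<in>T. w \<tau> * \<bar>p \<tau> - q \<tau>\<bar> / P + w \<tau> * q \<tau> * \<bar>1 / P - 1 / Q\<bar>)"
    by (intro sum_mono step)
  also have "\<dots> = D / P + Q * \<bar>1 / P - 1 / Q\<bar>"
    by (simp add: sum.distrib D_def Q_def sum_divide_distrib sum_distrib_right)
  also have "\<dots> \<le> 2 * (D / P)" using second by simp
  also have "\<dots> \<le> 2 * (wmax * (\<Sum>\<tau>\<in>T. \<bar>p \<tau> - q \<tau>\<bar>) / wmin)"
  proof -
    have "D / P \<le> D / wmin" using D0 Pge wmin by (intro divide_left_mono) auto
    also have "\<dots> \<le> wmax * (\<Sum>\<tau>\<in>T. \<bar>p \<tau> - q \<tau>\<bar>) / wmin" using Dle wmin by (intro divide_right_mono) auto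
    finally show ?thesis by simp
  qed
  finally show ?thesis by (simp add: P_def Q_def)
qed



lemma weight_pos: "\<forall>a\<in>set G. 0 < fst a (map \<sigma> (snd a)) \<Longrightarrow> 0 < weight G \<sigma>"
  by (induction G) (auto simp: weight_def)

lemma configs_ne: "configs n \<noteq> {}"
  unfolding configs_def by (auto simp: PiE_eq_empty_iff)

lemma partition_pos:
  fixes G :: "'s::finite fgraph"
  assumes "\<forall>a\<in>set G. \<forall>\<sigma>. 0 < fst a (map \<sigma> (snd a))"
  shows "0 < partition_fn n G"
proof -
  have "\<And>\<sigma>. 0 < weight G \<sigma>" by (rule weight_pos) (use assms in blast)
  then show ?thesis unfolding partition_fn_def using configs_ne[of n]
    by (intro sum_pos) auto
qed

lemma probG_pos:
  fixes G :: "'s::finite fgraph"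
  assumes "\<forall>a\<in>set G. \<forall>\<sigma>. 0 < fst a (map \<sigma> (snd a))"
  shows "probG n G"
proof -
  have Z: "0 < partition_fn n G" by (rule partition_pos[OF assms])
  show ?thesis unfolding probG_def gibbs_def
  proof
    show "\<forall>\<sigma>\<in>configs n. 0 \<le> weight G \<sigma> / partition_fn n G"
      using Z weight_pos[of G] assms by (auto intro!: divide_nonneg_pos less_imp_le)
    show "(\<Sum>\<sigma>\<in>configs n. weight G \<sigma> / partition_fn n G) = 1"
      using Z by (simp add: sum_divide_distrib[symmetric] partition_fn_def)
  qed
qed

lemma weight_del:
  assumes "i < length G"
  shows "weight G \<sigma> = fst (G!i) (map \<sigma> (snd (G!i))) * weight (del_constr G i) \<sigma>"
proof -
  have "weight G \<sigma> = weight (take i G @ G!i # drop (Suc i) G) \<sigma>"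
    using id_take_nth_drop[OF assms] by simp
  then show ?thesis by (simp add: weight_def del_constr_def)
qed

lemma set_del: "set (del_constr G i) \<subseteq> set G"
  unfolding del_constr_def using set_take_subset set_drop_subset by fastforce

lemma restrict_lc: "restrict \<sigma> (set vs) \<in> local_configs vs"
  by (simp add: local_configs_def)

lemma sum_group_lc:
  "(\<Sum>\<sigma>\<in>configs n. F \<sigma>) = (\<Sum>\<tau>\<in>(local_configs vs::(nat\<Rightarrow>'s::finite) set). \<Sum>\<sigma>\<in>{\<sigma>\<in>configs n. restrict \<sigma> (set vs) = \<tau>}. F \<sigma>)"
  by (rule sum.group[symmetric]) (auto simp: restrict_lc)

lemma bp_error_bound:
  fixes G :: "'s::finite fgraph"
  assumes i: "i < length G"
    and wpos: "\<forall>a\<in>set G. \<forall>\<sigma>. 0 < fst a (map \<sigma> (snd a))"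
    and wmin: "0 < wmin"
    and wb: "\<forall>\<tau>. wmin \<le> fst (G!i) (map \<tau> (snd (G!i))) \<and> fst (G!i) (map \<tau> (snd (G!i))) \<le> wmax"
  shows "bp_error n G i \<le> 2 * (wmax / wmin) * jdist n (del_constr G i) (snd (G!i))"
proof -
  define H where "H = del_constr G i"
  define \<psi> where "\<psi> = fst (G!i)"
  define vs where "vs = snd (G!i)"
  define w where "w \<tau> = \<psi> (map \<tau> vs)" for \<tau>
  let ?L = "local_configs vs :: (nat \<Rightarrow> 's) set"
  let ?F = "\<lambda>\<tau>. {\<sigma>\<in>configs n. restrict \<sigma> (set vs) = \<tau>}"
  define WH where "WH \<tau> = (\<Sum>\<sigma>\<in>?F \<tau>. weight H \<sigma>)" for \<tau>
  define p where "p \<tau> = marg_constr n H vs \<tau>" for \<tau>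
  define q where "q \<tau> = (\<Prod>x\<in>set vs. marg1 n H x (\<tau> x))" for \<tau>
  have Hpos: "\<forall>a\<in>set H. \<forall>\<sigma>. 0 < fst a (map \<sigma> (snd a))" using wpos set_del[of G i] by (auto simp: H_def)
  have PH: "probG n H" by (rule probG_pos[OF Hpos])
  have ZH: "0 < partition_fn n H" by (rule partition_pos[OF Hpos])
  have ZG: "0 < partition_fn n G" by (rule partition_pos[OF wpos])
  have mapeq: "map \<sigma> vs = map \<tau> vs" if "\<sigma> \<in> ?F \<tau>" for \<sigma> \<tau>
  proof (rule map_cong[OF refl])
    fix x assume "x \<in> set vs"
    then show "\<sigma> x = \<tau> x" using that by (auto simp: fun_eq_iff restrict_def split: if_splits)
  qed
  have wG: "weight G \<sigma> = w \<sigma> * weight H \<sigma>" for \<sigma>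
    unfolding w_def \<psi>_def vs_def H_def by (rule weight_del[OF i])
  have Fsum: "(\<Sum>\<sigma>\<in>?F \<tau>. weight G \<sigma>) = w \<tau> * WH \<tau>" for \<tau>
    unfolding WH_def sum_distrib_left
  proof (intro sum.cong refl)
    fix \<sigma> assume s: "\<sigma> \<in> ?F \<tau>"
    show "weight G \<sigma> = w \<tau> * weight H \<sigma>" by (simp only: wG w_def mapeq[OF s])
  qed
  have ZGe: "partition_fn n G = (\<Sum>\<tau>\<in>?L. w \<tau> * WH \<tau>)"
    unfolding partition_fn_def by (subst sum_group_lc[of _ _ vs]) (simp add: Fsum)
  have ZHe: "partition_fn n H = (\<Sum>\<tau>\<in>?L. WH \<tau>)"
    unfolding partition_fn_def WH_def by (rule sum_group_lc)
  have pe: "p \<tau> = WH \<tau> / partition_fn n H" for \<tau>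
    by (simp add: p_def marg_constr_def gibbs_def WH_def sum_divide_distrib)
  have mcG: "marg_constr n G vs \<tau> = w \<tau> * p \<tau> / (\<Sum>\<tau>'\<in>?L. w \<tau>' * p \<tau>')" for \<tau>
  proof -
    have "marg_constr n G vs \<tau> = w \<tau> * WH \<tau> / partition_fn n G"
      by (simp add: marg_constr_def gibbs_def sum_divide_distrib[symmetric] Fsum)
    also have "\<dots> = w \<tau> * p \<tau> / (\<Sum>\<tau>'\<in>?L. w \<tau>' * p \<tau>')"
      using ZH unfolding ZGe pe by (simp add: sum_divide_distrib[symmetric] field_simps)
    finally show ?thesis .
  qed
  have bw: "bp_weight n G i \<tau> = w \<tau> * q \<tau>" for \<tau>
    by (simp add: bp_weight_def w_def \<psi>_def vs_def q_def cavity_def H_def)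
  have "bp_error n G i = (\<Sum>\<tau>\<in>?L. \<bar>w \<tau> * p \<tau> / (\<Sum>\<tau>'\<in>?L. w \<tau>' * p \<tau>') - w \<tau> * q \<tau> / (\<Sum>\<tau>'\<in>?L. w \<tau>' * q \<tau>')\<bar>)"
    unfolding bp_error_def vs_def[symmetric] bw mcG ..
  also have "\<dots> \<le> 2 * (wmax / wmin) * (\<Sum>\<tau>\<in>?L. \<bar>p \<tau> - q \<tau>\<bar>)"
  proof (rule normalize_bound)
    show "finite ?L" by simp
    show "0 < wmin" by fact
    show "\<forall>\<tau>\<in>?L. wmin \<le> w \<tau> \<and> w \<tau> \<le> wmax" using wb by (simp add: w_def \<psi>_def vs_def)
    show "\<forall>\<tau>\<in>?L. 0 \<le> p \<tau>" using margc_nonneg[OF PH] by (simp add: p_def)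
    show "\<forall>\<tau>\<in>?L. 0 \<le> q \<tau>" using marg1_nonneg[OF PH] by (simp add: q_def prod_nonneg)
    show "(\<Sum>\<tau>\<in>?L. p \<tau>) = 1" using ZH unfolding pe by (simp add: sum_divide_distrib[symmetric] ZHe)
  qed
  also have "(\<Sum>\<tau>\<in>?L. \<bar>p \<tau> - q \<tau>\<bar>) = jdist n H vs"
    by (simp add: jdist_def p_def q_def)
  finally show ?thesis by (simp add: H_def vs_def)
qed



lemma nn_swap:
  "(\<integral>\<^sup>+x. \<integral>\<^sup>+y. f x y \<partial>measure_pmf B \<partial>measure_pmf A) = (\<integral>\<^sup>+y. \<integral>\<^sup>+x. f x y \<partial>measure_pmf A \<partial>measure_pmf B)"
proof -
  have "(\<integral>\<^sup>+x. \<integral>\<^sup>+y. f x y \<partial>measure_pmf B \<partial>measure_pmf A) = (\<integral>\<^sup>+z. f (fst z) (snd z) \<partial>pair_pmf A B)"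
    by (simp add: nn_integral_pair_pmf')
  also have "\<dots> = (\<integral>\<^sup>+z. f (snd z) (fst z) \<partial>pair_pmf B A)"
    by (subst pair_commute_pmf) (simp add: split_beta)
  also have "\<dots> = (\<integral>\<^sup>+y. \<integral>\<^sup>+x. f x y \<partial>measure_pmf A \<partial>measure_pmf B)"
    by (simp add: nn_integral_pair_pmf')
  finally show ?thesis .
qed

lemma nn_rep_Suc:
  "(\<integral>\<^sup>+G. F G \<partial>replicate_pmf (Suc m) p) = (\<integral>\<^sup>+x. \<integral>\<^sup>+xs. F (x # xs) \<partial>replicate_pmf m p \<partial>p)"
  by simp

lemma rep_mecke:
  fixes g :: "'a list \<Rightarrow> 'a \<Rightarrow> ennreal"
  shows "(\<integral>\<^sup>+G. (\<Sum>i<length G. g (take i G @ drop (Suc i) G) (G!i)) \<partial>replicate_pmf m p)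
         = of_nat m * (\<integral>\<^sup>+H. \<integral>\<^sup>+a. g H a \<partial>p \<partial>replicate_pmf (m - 1) p)"
proof (induction m arbitrary: g)
  case 0
  then show ?case by simp
next
  case (Suc m)
  let ?K = "\<lambda>G. \<integral>\<^sup>+a. g G a \<partial>p"
  have split: "(\<Sum>i<length (x#xs). g (take i (x#xs) @ drop (Suc i) (x#xs)) ((x#xs)!i))
      = g xs x + (\<Sum>i<length xs. g (x # (take i xs @ drop (Suc i) xs)) (xs!i))" for x xs
    by (simp only: length_Cons sum.lessThan_Suc_shift) simp
  have "(\<integral>\<^sup>+G. (\<Sum>i<length G. g (take i G @ drop (Suc i) G) (G!i)) \<partial>replicate_pmf (Suc m) p)
      = (\<integral>\<^sup>+x. \<integral>\<^sup>+xs. g xs x + (\<Sum>i<length xs. g (x # (take i xs @ drop (Suc i) xs)) (xs!i))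
           \<partial>replicate_pmf m p \<partial>p)"
    by (simp only: nn_rep_Suc split)
  also have "\<dots> = (\<integral>\<^sup>+x. (\<integral>\<^sup>+xs. g xs x \<partial>replicate_pmf m p) +
        (\<integral>\<^sup>+xs. (\<Sum>i<length xs. g (x # (take i xs @ drop (Suc i) xs)) (xs!i)) \<partial>replicate_pmf m p) \<partial>p)"
    by (intro nn_integral_cong nn_integral_add) auto
  also have "\<dots> = (\<integral>\<^sup>+x. \<integral>\<^sup>+xs. g xs x \<partial>replicate_pmf m p \<partial>p) +
        (\<integral>\<^sup>+x. (\<integral>\<^sup>+xs. (\<Sum>i<length xs. g (x # (take i xs @ drop (Suc i) xs)) (xs!i)) \<partial>replicate_pmf m p) \<partial>p)"
    by (rule nn_integral_add) auto
  also have "(\<integral>\<^sup>+x. (\<integral>\<^sup>+xs. (\<Sum>i<length xs. g (x # (take i xs @ drop (Suc i) xs)) (xs!i)) \<partial>replicate_pmf m p) \<partial>p) =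
        (\<integral>\<^sup>+x. of_nat m * (\<integral>\<^sup>+H. \<integral>\<^sup>+a. g (x # H) a \<partial>p \<partial>replicate_pmf (m - 1) p) \<partial>p)"
  proof (intro nn_integral_cong)
    fix x show "(\<integral>\<^sup>+xs. (\<Sum>i<length xs. g (x # (take i xs @ drop (Suc i) xs)) (xs!i)) \<partial>replicate_pmf m p) =
        of_nat m * (\<integral>\<^sup>+H. \<integral>\<^sup>+a. g (x # H) a \<partial>p \<partial>replicate_pmf (m - 1) p)"
      using Suc.IH[of "\<lambda>H a. g (x # H) a"] by simp
  qed
  also have "(\<integral>\<^sup>+x. \<integral>\<^sup>+xs. g xs x \<partial>replicate_pmf m p \<partial>p) = (\<integral>\<^sup>+G. ?K G \<partial>replicate_pmf m p)"
    by (rule nn_swap)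
  also have "(\<integral>\<^sup>+x. of_nat m * (\<integral>\<^sup>+H. \<integral>\<^sup>+a. g (x # H) a \<partial>p \<partial>replicate_pmf (m - 1) p) \<partial>p)
      = of_nat m * (\<integral>\<^sup>+G. ?K G \<partial>replicate_pmf m p)"
  proof (cases m)
    case 0 then show ?thesis by simp
  next
    case (Suc m')
    have "(\<integral>\<^sup>+x. of_nat m * (\<integral>\<^sup>+H. ?K (x # H) \<partial>replicate_pmf (m - 1) p) \<partial>p)
        = of_nat m * (\<integral>\<^sup>+x. \<integral>\<^sup>+H. ?K (x # H) \<partial>replicate_pmf m' p \<partial>p)"
      using Suc by (simp add: nn_integral_cmult)
    also have "(\<integral>\<^sup>+x. \<integral>\<^sup>+H. ?K (x # H) \<partial>replicate_pmf m' p \<partial>p) = (\<integral>\<^sup>+G. ?K G \<partial>replicate_pmf m p)"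
      using Suc by (simp only: nn_rep_Suc)
    finally show ?thesis .
  qed
  also have "(\<integral>\<^sup>+G. ?K G \<partial>replicate_pmf m p) + of_nat m * (\<integral>\<^sup>+G. ?K G \<partial>replicate_pmf m p)
      = of_nat (Suc m) * (\<integral>\<^sup>+H. ?K H \<partial>replicate_pmf (Suc m - 1) p)"
    by (simp add: algebra_simps)
  finally show ?case .
qed

lemma poisson_shift:
  fixes h :: "nat \<Rightarrow> ennreal"
  assumes l: "0 < l"
  shows "(\<integral>\<^sup>+m. of_nat m * h (m - 1) \<partial>poisson_pmf l) = ennreal l * (\<integral>\<^sup>+m. h m \<partial>poisson_pmf l)"
proof -
  define F where "F = (\<lambda>m. ennreal (pmf (poisson_pmf l) m) * (of_nat m * h (m - 1)))"
  have FS: "F (Suc m) = ennreal l * (ennreal (pmf (poisson_pmf l) m) * h m)" for m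
  proof -
    have r: "pmf (poisson_pmf l) (Suc m) * real (Suc m) = l * pmf (poisson_pmf l) m"
      using l by (simp add: field_simps del: of_nat_Suc)
    have "F (Suc m) = ennreal (pmf (poisson_pmf l) (Suc m) * real (Suc m)) * h m"
      by (simp add: F_def ennreal_of_nat_eq_real_of_nat ennreal_mult' mult.assoc del: of_nat_Suc)
    also have "\<dots> = ennreal l * (ennreal (pmf (poisson_pmf l) m) * h m)"
      unfolding r by (simp only: ennreal_mult[OF less_imp_le[OF l] pmf_nonneg] mult.assoc)
    finally show ?thesis .
  qed
  have "(\<lambda>m. F (Suc m)) sums (\<Sum>m. F (Suc m))" by (rule summable_sums) simp
  then have "F sums ((\<Sum>m. F (Suc m)) + F 0)" by (rule sums_Suc)
  then have "suminf F = (\<Sum>m. F (Suc m))" by (simp add: F_def sums_iff)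
  also have "\<dots> = ennreal l * (\<Sum>m. ennreal (pmf (poisson_pmf l) m) * h m)"
    unfolding FS by (rule ennreal_suminf_cmult)
  finally have "suminf F = ennreal l * (\<Sum>m. ennreal (pmf (poisson_pmf l) m) * h m)" .
  moreover have "(\<integral>\<^sup>+m. of_nat m * h (m - 1) \<partial>poisson_pmf l) = suminf F"
    by (simp add: nn_integral_measure_pmf nn_integral_count_space_nat F_def)
  ultimately show ?thesis
    by (simp add: nn_integral_measure_pmf nn_integral_count_space_nat)
qed



definition Wset :: "('s list \<Rightarrow> real) set \<Rightarrow> nat \<Rightarrow> real set" where
  "Wset \<Psi> k = (\<lambda>(\<psi>, \<sigma>). \<psi> \<sigma>) ` (\<Psi> \<times> {\<sigma>. set \<sigma> \<subseteq> UNIV \<and> length \<sigma> = k})"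

lemma sqrt_le_eps:
  assumes "0 \<le> x" "0 < e" shows "sqrt x \<le> e + x / (4 * e)"
proof -
  have "0 \<le> (sqrt x - 2 * e)\<^sup>2" by simp
  then have "4 * e * sqrt x \<le> x + 4 * e\<^sup>2"
    using assms by (simp add: power2_eq_square algebra_simps)
  then have "sqrt x \<le> (x + 4 * e\<^sup>2) / (4 * e)" using assms by (simp add: field_simps)
  also have "\<dots> = e + x / (4 * e)" using assms by (simp add: field_simps power2_eq_square)
  finally show ?thesis .
qed

lemma marg1_le1: assumes "probG n G" shows "marg1 n G x s \<le> 1"
proof -
  have "marg1 n G x s \<le> (\<Sum>\<sigma>\<in>configs n. gibbs n G \<sigma>)"
    unfolding marg1_def using assms unfolding probG_def by (intro sum_mono2) auto
  then show ?thesis using assms unfolding probG_def by simp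
qed

lemma marg2_le1: assumes "probG n G" shows "marg2 n G x y s t \<le> 1"
proof -
  have "marg2 n G x y s t \<le> (\<Sum>\<sigma>\<in>configs n. gibbs n G \<sigma>)"
    unfolding marg2_def using assms unfolding probG_def by (intro sum_mono2) auto
  then show ?thesis using assms unfolding probG_def by simp
qed

lemma marg2_nonneg: "probG n G \<Longrightarrow> 0 \<le> marg2 n G x y s t"
  unfolding marg2_def probG_def by (auto intro!: sum_nonneg)

lemma tv_le:
  fixes G :: "'s::finite fgraph"
  assumes P: "probG n G" shows "tv_pair n G x y \<le> real CARD('s) ^ 2"
proof -
  have "\<bar>marg2 n G x y s t - marg1 n G x s * marg1 n G y t\<bar> \<le> 1" for s t
  proof -
    have "0 \<le> marg1 n G x s * marg1 n G y t" "marg1 n G x s * marg1 n G y t \<le> 1"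
      using marg1_nonneg[OF P] marg1_le1[OF P] by (auto intro: mult_le_one)
    then show ?thesis using marg2_nonneg[OF P, of x y s t] marg2_le1[OF P, of x y s t]
      unfolding abs_le_iff by linarith
  qed
  then have "tv_pair n G x y \<le> (1/2) * (\<Sum>s\<in>(UNIV::'s set). \<Sum>t\<in>(UNIV::'s set). 1)"
    unfolding tv_pair_def by (intro mult_left_mono sum_mono) auto
  also have "\<dots> \<le> real CARD('s) ^ 2" by (simp add: power2_eq_square)
  finally show ?thesis .
qed

locale rfg_setup =
  fixes d :: real and k n :: nat and \<Psi> :: "('s::finite list \<Rightarrow> real) set"
    and \<rho> :: "('s list \<Rightarrow> real) pmf"
  assumes d_pos: "d > 0" and k_pos: "k > 0" and n_pos: "n > 0"
    and Psi_fin: "finite \<Psi>" and Psi_ne: "\<Psi> \<noteq> {}"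
    and Psi_pos: "\<forall>\<psi>\<in>\<Psi>. \<forall>\<sigma>::'s list. length \<sigma> = k \<longrightarrow> \<psi> \<sigma> > 0"
    and rho_on_Psi: "set_pmf \<rho> \<subseteq> \<Psi>"

context rfg_setup
begin

lemma LL_alt: "{vs. length vs = k \<and> set vs \<subseteq> {..<n}} = LL n k"
  by (auto simp: LL_def)

lemma LL_ne: "LL n k \<noteq> {}"
proof -
  have "replicate k 0 \<in> LL n k" using n_pos by (auto simp: LL_def)
  then show ?thesis by blast
qed

lemma set_cp: "set_pmf (constr_pmf n k \<rho>) = set_pmf \<rho> \<times> LL n k"
  unfolding constr_pmf_def LL_alt using LL_ne by simp

lemma good_support:
  assumes "G \<in> set_pmf (random_fg n d k \<rho>)" "a \<in> set G"
  shows "fst a \<in> \<Psi> \<and> length (snd a) = k \<and> set (snd a) \<subseteq> {..<n}"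
proof -
  have "a \<in> set_pmf \<rho> \<times> LL n k"
    using assms unfolding random_fg_def by (auto simp: set_replicate_pmf set_cp)
  then show ?thesis using rho_on_Psi by (auto simp: LL_def)
qed

lemma wpos_support:
  assumes "G \<in> set_pmf (random_fg n d k \<rho>)"
  shows "\<forall>a\<in>set G. \<forall>\<sigma>. 0 < fst a (map \<sigma> (snd a))"
  using good_support[OF assms] Psi_pos by auto

lemma probG_support:
  assumes "G \<in> set_pmf (random_fg n d k \<rho>)" shows "probG n G"
  by (rule probG_pos[OF wpos_support[OF assms]])

lemma W_fin: "finite (Wset \<Psi> k)"
proof -
  have "finite {\<sigma>::'s list. length \<sigma> = k}" using finite_lists_length_eq[of "UNIV::'s set" k] by simp
  then show ?thesis unfolding Wset_def using Psi_fin by simp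
qed

lemma W_ne: "Wset \<Psi> k \<noteq> {}"
proof -
  obtain \<psi> where "\<psi> \<in> \<Psi>" using Psi_ne by blast
  then have "\<psi> (replicate k undefined) \<in> Wset \<Psi> k" unfolding Wset_def by force
  then show ?thesis by blast
qed

lemma W_pos: "x \<in> Wset \<Psi> k \<Longrightarrow> 0 < x"
  unfolding Wset_def using Psi_pos by auto

lemma wmin_pos: "0 < Min (Wset \<Psi> k)"
  using W_fin W_ne W_pos by auto

lemma w_bounds:
  assumes "\<psi> \<in> \<Psi>" "length \<sigma> = k"
  shows "Min (Wset \<Psi> k) \<le> \<psi> \<sigma> \<and> \<psi> \<sigma> \<le> Max (Wset \<Psi> k)"
proof -
  have "\<psi> \<sigma> \<in> Wset \<Psi> k" unfolding Wset_def using assms by force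
  then show ?thesis using W_fin by auto
qed

definition RR where "RR = Max (Wset \<Psi> k) / Min (Wset \<Psi> k)"

lemma RR_nonneg: "0 \<le> RR"
  unfolding RR_def using wmin_pos W_fin W_ne W_pos
  by (metis Max_in divide_nonneg_pos less_imp_le)

lemma bp_le:
  assumes G: "G \<in> set_pmf (random_fg n d k \<rho>)" and i: "i < length G"
  shows "bp_error n G i \<le> 2 * RR * jdist n (del_constr G i) (snd (G!i))"
proof -
  have gi: "fst (G!i) \<in> \<Psi> \<and> length (snd (G!i)) = k"
    using good_support[OF G, of "G!i"] i by auto
  show ?thesis unfolding RR_def
  proof (rule bp_error_bound[OF i wpos_support[OF G] wmin_pos])
    show "\<forall>\<tau>. Min (Wset \<Psi> k) \<le> fst (G!i) (map \<tau> (snd (G!i))) \<and> fst (G!i) (map \<tau> (snd (G!i))) \<le> Max (Wset \<Psi> k)"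
      using gi w_bounds by auto
  qed
qed

end


context rfg_setup
begin

lemma avg_bound:
  fixes H :: "'s fgraph"
  assumes P: "probG n H" and e: "0 < e"
  shows "2 * RR * (\<Sum>vs\<in>LL n k. jdist n H vs) / real (card (LL n k))
     \<le> 2 * RR * real k * real CARD('s) ^ k * (e + (TT n H / (real n)^2) / (2 * e))"
proof -
  let ?S = "\<Sum>vs\<in>LL n k. jdist n H vs"
  let ?c = "real CARD('s) ^ k"
  have np: "0 < real n" using n_pos by simp
  have kw: "real n * ?S \<le> real k * real n ^ k * ?c * sqrt (2 * TT n H)"
    using kwise[OF P, of k] by simp
  have "?S / real (card (LL n k)) = (real n * ?S) / (real n * real n ^ k)"
    using np by (simp add: card_LL)
  also have "\<dots> \<le> (real k * real n ^ k * ?c * sqrt (2 * TT n H)) / (real n * real n ^ k)"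
    using kw np by (intro divide_right_mono) auto
  also have "\<dots> = real k * ?c * (sqrt (2 * TT n H) / real n)"
    using np by (simp add: field_simps)
  also have "sqrt (2 * TT n H) / real n = sqrt (2 * TT n H / (real n)^2)"
    using np by (simp add: real_sqrt_divide)
  also have "\<dots> \<le> e + (2 * TT n H / (real n)^2) / (4 * e)"
    using TT_nonneg[of n H] e by (intro sqrt_le_eps) auto
  also have "(2 * TT n H / (real n)^2) / (4 * e) = (TT n H / (real n)^2) / (2 * e)"
    by (simp add: field_simps)
  finally have "?S / real (card (LL n k)) \<le> real k * ?c * (e + (TT n H / (real n)^2) / (2 * e))"
    using e by (simp add: mult_left_mono)
  then have "2 * RR * (?S / real (card (LL n k))) \<le> 2 * RR * (real k * ?c * (e + (TT n H / (real n)^2) / (2 * e)))"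
    using RR_nonneg by (intro mult_left_mono) auto
  then show ?thesis by (simp add: mult_ac)
qed

lemma inner_bound:
  fixes H :: "'s fgraph"
  assumes P: "probG n H" and e: "0 < e"
  shows "(\<integral>\<^sup>+a. ennreal (2 * RR * jdist n H (snd a)) \<partial>constr_pmf n k \<rho>)
     \<le> ennreal (2 * RR * real k * real CARD('s) ^ k * (e + (TT n H / (real n)^2) / (2 * e)))"
proof -
  have jd0: "\<And>vs. 0 \<le> 2 * RR * jdist n H vs"
    using RR_nonneg by (auto simp: jdist_def intro!: sum_nonneg)
  have "(\<integral>\<^sup>+a. ennreal (2 * RR * jdist n H (snd a)) \<partial>constr_pmf n k \<rho>)
      = (\<integral>\<^sup>+\<psi>. (\<Sum>vs\<in>LL n k. ennreal (2 * RR * jdist n H vs)) / of_nat (card (LL n k)) \<partial>\<rho>)"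
    unfolding constr_pmf_def LL_alt using LL_ne
    by (simp add: nn_integral_pair_pmf' nn_integral_pmf_of_set)
  also have "\<dots> = (\<Sum>vs\<in>LL n k. ennreal (2 * RR * jdist n H vs)) / of_nat (card (LL n k))"
    by (simp add: measure_pmf.emeasure_space_1)
  also have "\<dots> = ennreal (2 * RR * (\<Sum>vs\<in>LL n k. jdist n H vs)) / ennreal (real (card (LL n k)))"
    using jd0 by (simp add: sum_distrib_left[symmetric] ennreal_of_nat_eq_real_of_nat)
  also have "\<dots> = ennreal (2 * RR * (\<Sum>vs\<in>LL n k. jdist n H vs) / real (card (LL n k)))"
  proof (rule divide_ennreal)
    show "0 \<le> 2 * RR * (\<Sum>vs\<in>LL n k. jdist n H vs)"
      using RR_nonneg by (auto simp: jdist_def intro!: sum_nonneg mult_nonneg_nonneg)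
    show "0 < real (card (LL n k))" using LL_ne by (simp add: card_gt_0_iff)
  qed
  also have "\<dots> \<le> ennreal (2 * RR * real k * real CARD('s) ^ k * (e + (TT n H / (real n)^2) / (2 * e)))"
    by (intro ennreal_leI avg_bound[OF P e])
  finally show ?thesis .
qed

end


context rfg_setup
begin

lemma main_bound:
  assumes e: "0 < e"
  shows "measure_pmf.expectation (random_fg n d k \<rho>) (\<lambda>G. \<Sum>i<length G. bp_error n G i)
    \<le> (d * real n / real k) * ((2 * (Max (Wset \<Psi> k) / Min (Wset \<Psi> k)) * real k * real CARD('s) ^ k) *
         (e + ((1 / (real n)^2) * (\<Sum>i<n. \<Sum>j<n. measure_pmf.expectation (random_fg n d k \<rho>)
                          (\<lambda>G. tv_pair n G i j))) / (2 * e)))"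
proof -
  define X where "X = random_fg n d k \<rho>"
  define cp where "cp = constr_pmf n k \<rho>"
  define l where "l = d * real n / real k"
  define C where "C = 2 * RR * real k * real CARD('s) ^ k"
  define Fb where "Fb H = C * (e + (TT n H / (real n)^2) / (2 * e))" for H :: "'s fgraph"
  define g where "g H a = ennreal (2 * RR * jdist n H (snd a))" for H :: "'s fgraph" and a :: "'s constr"
  define F where "F G = (\<Sum>i<length G. bp_error n G i)" for G :: "'s fgraph"
  have l: "0 < l" using d_pos n_pos k_pos by (simp add: l_def)
  have C0: "0 \<le> C" using RR_nonneg by (simp add: C_def)
  have F0: "0 \<le> F G" for G by (auto simp: F_def bp_error_def intro!: sum_nonneg)
  have jd0: "0 \<le> 2 * RR * jdist n H vs" for H vs
    using RR_nonneg by (auto simp: jdist_def intro!: sum_nonneg mult_nonneg_nonneg)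
  have s1: "(\<integral>\<^sup>+G. ennreal (F G) \<partial>X) \<le> (\<integral>\<^sup>+G. (\<Sum>i<length G. g (del_constr G i) (G!i)) \<partial>X)"
  proof (rule nn_integral_mono_AE, unfold AE_measure_pmf_iff, intro ballI)
    fix G assume G: "G \<in> set_pmf X"
    have "ennreal (F G) \<le> ennreal (\<Sum>i<length G. 2 * RR * jdist n (del_constr G i) (snd (G!i)))"
      unfolding F_def using G by (intro ennreal_leI sum_mono bp_le) (auto simp: X_def)
    also have "\<dots> = (\<Sum>i<length G. g (del_constr G i) (G!i))"
      unfolding g_def by (rule sum_ennreal[symmetric]) (rule jd0)
    finally show "ennreal (F G) \<le> (\<Sum>i<length G. g (del_constr G i) (G!i))" .
  qed
  have s2: "(\<integral>\<^sup>+G. (\<Sum>i<length G. g (del_constr G i) (G!i)) \<partial>X) = ennreal l * (\<integral>\<^sup>+H. \<integral>\<^sup>+a. g H a \<partial>cp \<partial>X)"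
  proof -
    have "(\<integral>\<^sup>+G. (\<Sum>i<length G. g (del_constr G i) (G!i)) \<partial>X)
        = (\<integral>\<^sup>+m. of_nat m * (\<integral>\<^sup>+H. \<integral>\<^sup>+a. g H a \<partial>cp \<partial>replicate_pmf (m - 1) cp) \<partial>poisson_pmf l)"
      unfolding X_def random_fg_def del_constr_def by (simp add: rep_mecke cp_def l_def)
    also have "\<dots> = ennreal l * (\<integral>\<^sup>+m. (\<integral>\<^sup>+H. \<integral>\<^sup>+a. g H a \<partial>cp \<partial>replicate_pmf m cp) \<partial>poisson_pmf l)"
      by (rule poisson_shift[OF l])
    also have "(\<integral>\<^sup>+m. (\<integral>\<^sup>+H. \<integral>\<^sup>+a. g H a \<partial>cp \<partial>replicate_pmf m cp) \<partial>poisson_pmf l)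
        = (\<integral>\<^sup>+H. \<integral>\<^sup>+a. g H a \<partial>cp \<partial>X)"
      unfolding X_def random_fg_def by (simp add: cp_def l_def)
    finally show ?thesis .
  qed
  have s3: "(\<integral>\<^sup>+H. \<integral>\<^sup>+a. g H a \<partial>cp \<partial>X) \<le> (\<integral>\<^sup>+H. ennreal (Fb H) \<partial>X)"
  proof (rule nn_integral_mono_AE, unfold AE_measure_pmf_iff, intro ballI)
    fix H assume H: "H \<in> set_pmf X"
    show "(\<integral>\<^sup>+a. g H a \<partial>cp) \<le> ennreal (Fb H)"
      unfolding g_def Fb_def C_def cp_def
      using inner_bound[OF probG_support e, of H] H by (simp add: X_def mult_ac)
  qed
  have tvint: "integrable X (\<lambda>G. tv_pair n G i j)" for i j
  proof (rule measure_pmf.integrable_const_bound[where B="real CARD('s) ^ 2"])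
    show "AE G in X. norm (tv_pair n G i j) \<le> real CARD('s) ^ 2"
      unfolding AE_measure_pmf_iff
    proof
      fix G assume "G \<in> set_pmf X"
      then have "probG n G" by (simp add: X_def probG_support)
      then show "norm (tv_pair n G i j) \<le> real CARD('s) ^ 2"
        using tv_le[of n G i j] tv_pair_nonneg[of n G i j] by simp
    qed
  qed simp
  have TTint: "integrable X (\<lambda>H. TT n H)"
    unfolding TT_def by (simp add: tvint)
  have intTT: "(\<integral>H. TT n H \<partial>X) = (\<Sum>i<n. \<Sum>j<n. \<integral>G. tv_pair n G i j \<partial>X)"
    unfolding TT_def by (simp add: tvint)
  have Fbe: "Fb H = C * e + (C / (2 * e * (real n)^2)) * TT n H" for H
    using e n_pos by (simp add: Fb_def field_simps)
  have Fbint: "integrable X Fb" unfolding Fbe using TTint by simp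
  have Fb0: "0 \<le> Fb H" for H using C0 e TT_nonneg[of n H] by (simp add: Fb_def)
  have s4: "(\<integral>\<^sup>+H. ennreal (Fb H) \<partial>X) = ennreal (\<integral>H. Fb H \<partial>X)"
    using Fbint Fb0 by (intro nn_integral_eq_integral) auto
  have s5: "(\<integral>H. Fb H \<partial>X) = C * (e + ((1 / (real n)^2) * (\<Sum>i<n. \<Sum>j<n. \<integral>G. tv_pair n G i j \<partial>X)) / (2 * e))"
    unfolding Fbe using TTint e n_pos by (simp add: intTT field_simps)
  have If0: "0 \<le> (\<integral>H. Fb H \<partial>X)" using Fb0 by (simp add: integral_nonneg)
  have "measure_pmf.expectation X F = enn2real (\<integral>\<^sup>+G. ennreal (F G) \<partial>X)"
    using F0 by (intro integral_eq_nn_integral) auto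
  also have "\<dots> \<le> l * (\<integral>H. Fb H \<partial>X)"
  proof (rule enn2real_leI)
    show "0 \<le> l * (\<integral>H. Fb H \<partial>X)" using l If0 by simp
    have "(\<integral>\<^sup>+G. ennreal (F G) \<partial>X) \<le> ennreal l * (\<integral>\<^sup>+H. ennreal (Fb H) \<partial>X)"
    proof -
      have "ennreal l * (\<integral>\<^sup>+H. \<integral>\<^sup>+a. g H a \<partial>cp \<partial>X) \<le> ennreal l * (\<integral>\<^sup>+H. ennreal (Fb H) \<partial>X)"
        by (rule mult_left_mono[OF s3]) simp
      then show ?thesis using s1 s2 by simp
    qed
    also have "\<dots> = ennreal (l * (\<integral>H. Fb H \<partial>X))"
      using l If0 by (simp add: s4 ennreal_mult)
    finally show "(\<integral>\<^sup>+G. ennreal (F G) \<partial>X) \<le> ennreal (l * (\<integral>H. Fb H \<partial>X))" .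
  qed
  finally have fin: "measure_pmf.expectation X F \<le> l * (\<integral>H. Fb H \<partial>X)" .
  show ?thesis using fin[unfolded s5] unfolding X_def F_def[abs_def] l_def C_def RR_def .
qed

end


theorem lemma10:
  fixes d :: real and k :: nat
    and \<Psi> :: "('s::finite list \<Rightarrow> real) set"
    and \<rho> :: "('s list \<Rightarrow> real) pmf"
  assumes d_pos: "d > 0"
    and k_ge: "k \<ge> 3"
    and Psi_fin: "finite \<Psi>" and Psi_ne: "\<Psi> \<noteq> {}"
    and Psi_pos: "\<forall>\<psi>\<in>\<Psi>. \<forall>\<sigma>::'s list. length \<sigma> = k \<longrightarrow> \<psi> \<sigma> > 0"
    and rho_on_Psi: "set_pmf \<rho> \<subseteq> \<Psi>"
    and decorr: "(\<lambda>n. (1 / (real n)^2) *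
        (\<Sum>i<n. \<Sum>j<n. measure_pmf.expectation (random_fg n d k \<rho>)
                          (\<lambda>G. tv_pair n G i j))) \<longlonglongrightarrow> 0"
  shows "(\<lambda>n. (1 / real n) *
        measure_pmf.expectation (random_fg n d k \<rho>)
          (\<lambda>G. \<Sum>i<length G. bp_error n G i)) \<longlonglongrightarrow> 0"
proof -
  have loc: "rfg_setup d k n \<Psi> \<rho>" if "0 < n" for n
    using that d_pos k_ge Psi_fin Psi_ne Psi_pos rho_on_Psi by unfold_locales auto
  define b where "b n = (1 / (real n)^2) *
        (\<Sum>i<n. \<Sum>j<n. measure_pmf.expectation (random_fg n d k \<rho>) (\<lambda>G. tv_pair n G i j))" for n
  define a where "a n = (1 / real n) *
        measure_pmf.expectation (random_fg n d k \<rho>) (\<lambda>G. \<Sum>i<length G. bp_error n G i)" for n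
  define K where "K = (d / real k) * (2 * (Max (Wset \<Psi> k) / Min (Wset \<Psi> k)) * real k * real CARD('s) ^ k)"
  have kpos: "0 < real k" using k_ge by simp
  have wmin: "0 < Min (Wset \<Psi> k)" by (rule rfg_setup.wmin_pos[OF loc[of 1]]) simp
  have R0: "0 \<le> Max (Wset \<Psi> k) / Min (Wset \<Psi> k)"
    using rfg_setup.RR_nonneg[OF loc[of 1]] by (simp add: rfg_setup.RR_def[OF loc[of 1]])
  have K0: "0 \<le> K"
  proof -
    have h1: "0 \<le> 2 * (Max (Wset \<Psi> k) / Min (Wset \<Psi> k)) * real k * real CARD('s) ^ k"
      by (intro mult_nonneg_nonneg) (use R0 in auto)
    have h2: "0 \<le> d / real k" using d_pos by simp
    show ?thesis unfolding K_def by (rule mult_nonneg_nonneg[OF h2 h1])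
  qed
  have a0: "0 \<le> a n" for n
  proof -
    have "0 \<le> measure_pmf.expectation (random_fg n d k \<rho>) (\<lambda>G. \<Sum>i<length G. bp_error n G i)"
      by (rule Bochner_Integration.integral_nonneg) (auto simp: bp_error_def intro!: sum_nonneg)
    then show ?thesis unfolding a_def by simp
  qed
  have abound: "a n \<le> K * (e + b n / (2 * e))" if n: "0 < n" and e: "0 < e" for n e
  proof -
    have "a n \<le> (1 / real n) * ((d * real n / real k) * ((2 * (Max (Wset \<Psi> k) / Min (Wset \<Psi> k)) * real k * real CARD('s) ^ k) *
         (e + b n / (2 * e))))"
      unfolding a_def b_def using n
      by (intro mult_left_mono rfg_setup.main_bound[OF loc[OF n] e]) auto
    also have "\<dots> = K * (e + b n / (2 * e))"
      using n kpos e wmin by (simp add: K_def field_simps)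
    finally show ?thesis .
  qed
  have bl: "b \<longlonglongrightarrow> 0" using decorr by (simp add: b_def[abs_def])
  show ?thesis
    unfolding a_def[symmetric]
  proof (rule LIMSEQ_I)
    fix r :: real assume r: "0 < r"
    define e where "e = r / (2 * (K + 1))"
    have e: "0 < e" using r K0 by (simp add: e_def)
    have Ke: "(K + 1) * e = r / 2" using K0 by (simp add: e_def field_simps)
    have "0 < r * e / (K + 1)" using r e K0 by simp
    from LIMSEQ_D[OF bl this] obtain N where N: "\<And>n. n \<ge> N \<Longrightarrow> norm (b n - 0) < r * e / (K + 1)" by blast
    show "\<exists>no. \<forall>n\<ge>no. norm (a n - 0) < r"
    proof (intro exI allI impI)
      fix n assume n: "max N 1 \<le> n"
      then have np: "0 < n" by simp
      have bn: "\<bar>b n\<bar> < r * e / (K + 1)" using N[of n] n by simp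
      have t1: "K * e < r / 2" using Ke e by (simp add: algebra_simps)
      have "K * (b n / (2 * e)) \<le> K * (\<bar>b n\<bar> / (2 * e))"
        using K0 e by (intro mult_left_mono divide_right_mono) auto
      also have "\<dots> \<le> (K + 1) * (\<bar>b n\<bar> / (2 * e))"
        using e by (intro mult_right_mono) auto
      also have "\<dots> \<le> (K + 1) * ((r * e / (K + 1)) / (2 * e))"
        using K0 e bn by (intro mult_left_mono divide_right_mono) auto
      also have "\<dots> = ((K + 1) * (r * e / (K + 1))) / (2 * e)" by (simp only: times_divide_eq_right)
      also have "(K + 1) * (r * e / (K + 1)) = r * e" using K0 by simp
      also have "r * e / (2 * e) = r / 2" using e by simp
      finally have t2: "K * (b n / (2 * e)) \<le> r / 2" .
      have "a n \<le> K * e + K * (b n / (2 * e))" using abound[OF np e] by (simp add: distrib_left)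
      then have "a n < r" using t1 t2 by linarith
      then show "norm (a n - 0) < r" using a0[of n] by simp
    qed
  qed
qed


end
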